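(* Let $T$ be an $\mathcal O$-operator on a Lie algebra $\mathfrak g$ with respect to a representation $(V;\rho)$ and let $T_t=\sum_{i=0}^n\tau_it^i$ be an order $n$ deformation of $T$. Define $\mathrm{Ob}\in\mathrm{Hom}(\wedge^2V,\mathfrak g)$ by $$\mathrm{Ob}(u,v)=\sum_{i+j=n+1,\ i,j\ge1}\Big([\tau_i(u),\tau_j(v)]-\tau_i\big(\rho(\tau_j(u))(v)-\rho(\tau_j(v))(u)\big)\Big).$$ Then $\mathrm{Ob}$ is a $2$-cocycle, i.e. $d_{\bar\rho}\mathrm{Ob}=0$.
   Context: An $\mathcal O$-operator: linear $T:V\to\mathfrak g$ with $[Tu,Tv]=T(\rho(Tu)(v)-\rho(Tv)(u))$. An order $n$ deformation of $T$ is $T_t=\sum_{i=0}^n\tau_it^i$ with $\tau_0=T$, $\tau_i\in\mathrm{Hom}(V,\mathfrak g)$, such that $[T_t(u),T_t(v)]=T_t(\rho(T_t(u))(v)-\rho(T_t(v))(u))$ in $\mathfrak g[[t]]/(t^{n+1})$, equivalently $\sum_{k+l=i,\,k,l\ge0}([\tau_ku,\tau_lv]-\tau_k(\rho(\tau_lu)(v)-\rho(\tau_lv)(u)))=0$ for $0\le i\le n$. With $[u,v]_T=\rho(Tu)(v)-\rho(Tv)(u)$, the coboundary $d_{\bar\rho}:\mathrm{Hom}(\wedge^kV,\mathfrak g)\to\mathrm{Hom}(\wedge^{k+1}V,\mathfrak g)$ is $d_{\bar\rho}f(u_1,\dots,u_{k+1})=\sum_{i}(-1)^{i+1}[Tu_i,f(\dots,\hat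 u_i,\dots)]+\sum_i(-1)^{i+1}T\rho(f(\dots,\hat u_i,\dots))(u_i)+\sum_{i<j}(-1)^{i+j}f([u_i,u_j]_T,u_1,\dots,\hat u_i,\dots,\hat u_j,\dots,u_{k+1})$. *)

theory Defs
  imports Complex_Main
begin

text \<open>Vector spaces over an abstract field 'k, given by explicit scalar multiplications
  (locale vector_space of HOL.Vector_Spaces). Linear maps are Vector_Spaces.linear.\<close>

definition lie_algebra :: "('k::field \<Rightarrow> 'g::ab_group_add \<Rightarrow> 'g) \<Rightarrow> ('g \<Rightarrow> 'g \<Rightarrow> 'g) \<Rightarrow> bool" where
  "lie_algebra sg br \<longleftrightarrow>
     vector_space sg \<and>
     (\<forall>x. Vector_Spaces.linear sg sg (br x)) \<and>
     (\<forall>y. Vector_Spaces.linear sg sg (\<lambda>x. br x y)) \<and>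
     (\<forall>x. br x x = 0) \<and>
     (\<forall>x y z. br x (br y z) + br y (br z x) + br z (br x y) = 0)"

definition lie_representation ::
  "('k::field \<Rightarrow> 'g::ab_group_add \<Rightarrow> 'g) \<Rightarrow> ('k \<Rightarrow> 'v::ab_group_add \<Rightarrow> 'v) \<Rightarrow>
   ('g \<Rightarrow> 'g \<Rightarrow> 'g) \<Rightarrow> ('g \<Rightarrow> 'v \<Rightarrow> 'v) \<Rightarrow> bool" where
  "lie_representation sg sv br \<rho> \<longleftrightarrow>
     lie_algebra sg br \<and> vector_space sv \<and>
     (\<forall>x. Vector_Spaces.linear sv sv (\<rho> x)) \<and>
     (\<forall>w. Vector_Spaces.linear sg sv (\<lambda>x. \<rho> x w)) \<and>
     (\<forall>x y w. \<rho> (br x y) w = \<rho> x (\<rho> y w) - \<rho> y (\<rho> x w))"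

definition O_operator ::
  "('k::field \<Rightarrow> 'g::ab_group_add \<Rightarrow> 'g) \<Rightarrow> ('k \<Rightarrow> 'v::ab_group_add \<Rightarrow> 'v) \<Rightarrow>
   ('g \<Rightarrow> 'g \<Rightarrow> 'g) \<Rightarrow> ('g \<Rightarrow> 'v \<Rightarrow> 'v) \<Rightarrow> ('v \<Rightarrow> 'g) \<Rightarrow> bool" where
  "O_operator sg sv br \<rho> T \<longleftrightarrow>
     Vector_Spaces.linear sv sg T \<and>
     (\<forall>u v. br (T u) (T v) = T (\<rho> (T u) v - \<rho> (T v) u))"

text \<open>Order n deformation T_t = sum_{i=0}^n tau_i t^i (only tau 0 .. tau n matter).\<close>
definition order_deformation ::
  "('k::field \<Rightarrow> 'g::ab_group_add \<Rightarrow> 'g) \<Rightarrow> ('k \<Rightarrow> 'v::ab_group_add \<Rightarrow> 'v) \<Rightarrow>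
   ('g \<Rightarrow> 'g \<Rightarrow> 'g) \<Rightarrow> ('g \<Rightarrow> 'v \<Rightarrow> 'v) \<Rightarrow> ('v \<Rightarrow> 'g) \<Rightarrow> nat \<Rightarrow> (nat \<Rightarrow> 'v \<Rightarrow> 'g) \<Rightarrow> bool" where
  "order_deformation sg sv br \<rho> T n \<tau> \<longleftrightarrow>
     \<tau> 0 = T \<and>
     (\<forall>i\<le>n. Vector_Spaces.linear sv sg (\<tau> i)) \<and>
     (\<forall>i\<le>n. \<forall>u v. (\<Sum>k\<in>{0..i}. br (\<tau> k u) (\<tau> (i - k) v)
                    - \<tau> k (\<rho> (\<tau> (i - k) u) v - \<rho> (\<tau> (i - k) v) u)) = 0)"

definition obstruction ::
  "('g::ab_group_add \<Rightarrow> 'g \<Rightarrow> 'g) \<Rightarrow> ('g \<Rightarrow> 'v::ab_group_add \<Rightarrow> 'v) \<Rightarrow> nat \<Rightarrow> (nat \<Rightarrow> 'v \<Rightarrow> 'g) \<Rightarrow> 'v \<Rightarrow> 'v \<Rightarrow> 'g" where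
  "obstruction br \<rho> n \<tau> u v =
     (\<Sum>i\<in>{1..n}. br (\<tau> i u) (\<tau> (n + 1 - i) v)
        - \<tau> i (\<rho> (\<tau> (n + 1 - i) u) v - \<rho> (\<tau> (n + 1 - i) v) u))"

definition T_bracket :: "('g \<Rightarrow> 'v::ab_group_add \<Rightarrow> 'v) \<Rightarrow> ('v \<Rightarrow> 'g) \<Rightarrow> 'v \<Rightarrow> 'v \<Rightarrow> 'v" where
  "T_bracket \<rho> T u v = \<rho> (T u) v - \<rho> (T v) u"

text \<open>The coboundary d_rhobar on 2-cochains, written out from the general formula (k = 2).\<close>
definition coboundary2 ::
  "('g::ab_group_add \<Rightarrow> 'g \<Rightarrow> 'g) \<Rightarrow> ('g \<Rightarrow> 'v::ab_group_add \<Rightarrow> 'v) \<Rightarrow> ('v \<Rightarrow> 'g) \<Rightarrow>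
   ('v \<Rightarrow> 'v \<Rightarrow> 'g) \<Rightarrow> 'v \<Rightarrow> 'v \<Rightarrow> 'v \<Rightarrow> 'g" where
  "coboundary2 br \<rho> T f u1 u2 u3 =
       br (T u1) (f u2 u3) - br (T u2) (f u1 u3) + br (T u3) (f u1 u2)
     + T (\<rho> (f u2 u3) u1) - T (\<rho> (f u1 u3) u2) + T (\<rho> (f u1 u2) u3)
     - f (T_bracket \<rho> T u1 u2) u3 + f (T_bracket \<rho> T u1 u3) u2 - f (T_bracket \<rho> T u2 u3) u1"

end

theory Submission
  imports Defs "HOL-Library.Function_Algebras"
begin

lemma addhom:
  fixes f :: "'a::ab_group_add \<Rightarrow> 'b::ab_group_add"
  assumes "\<And>x y. f (x + y) = f x + f y"
  shows "f 0 = 0" "f (- x) = - f x" "f (x - y) = f x - f y"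
proof -
  have "f 0 = f 0 + f 0" using assms[of 0 0] by simp
  then show z: "f 0 = 0" by simp
  have n: "f (- a) = - f a" for a
  proof -
    have "f a + f (- a) = 0" using assms[of a "-a"] z by simp
    then show ?thesis by (metis minus_unique)
  qed
  then show "f (- x) = - f x" .
  have "f (x + - y) = f x + f (- y)" by (rule assms)
  then show "f (x - y) = f x - f y" using n[of y] by simp
qed

lemma addhom_sum:
  fixes f :: "'a::ab_group_add \<Rightarrow> 'b::ab_group_add"
  assumes "\<And>x y. f (x + y) = f x + f y"
  shows "f (sum g S) = (\<Sum>i\<in>S. f (g i))"
proof (induction S rule: infinite_finite_induct)
  case (infinite A) then show ?case using addhom(1)[OF assms] by simp
next
  case empty then show ?case using addhom(1)[OF assms] by simp
next
  case (insert x F) then show ?case by (simp add: assms)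
qed

lemma Lgen:
  fixes br :: "'g::ab_group_add \<Rightarrow> 'g \<Rightarrow> 'g" and \<rho> :: "'g \<Rightarrow> 'v::ab_group_add \<Rightarrow> 'v"
    and A :: "'v \<Rightarrow> 'g"
  assumes bl: "\<And>x y z. br (x+y) z = br x z + br y z"
   and brr: "\<And>x y z. br x (y+z) = br x y + br x z"
   and anti: "\<And>x y. br x y = - br y x"
   and jac: "\<And>x y z. br x (br y z) + br y (br z x) + br z (br x y) = 0"
   and rl: "\<And>x y w. \<rho> (x+y) w = \<rho> x w + \<rho> y w"
   and rr: "\<And>x w w'. \<rho> x (w+w') = \<rho> x w + \<rho> x w'"
   and rep: "\<And>x y w. \<rho> (br x y) w = \<rho> x (\<rho> y w) - \<rho> y (\<rho> x w)"
   and Aadd: "\<And>u v. A (u+v) = A u + A v"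
 shows "coboundary2 br \<rho> A (\<lambda>u v. br (A u) (A v) - A (T_bracket \<rho> A u v)) u1 u2 u3 = 0"
proof -
  have bl': "br (x - y) z = br x z - br y z" "br (- x) z = - br x z" for x y z
    using addhom[of "\<lambda>x. br x z", OF bl] by auto
  have br': "br z (x - y) = br z x - br z y" "br z (- x) = - br z x" for x y z
    using addhom[of "br z", OF brr] by auto
  have rl': "\<rho> (x - y) w = \<rho> x w - \<rho> y w" "\<rho> (- x) w = - \<rho> x w" for x y w
    using addhom[of "\<lambda>x. \<rho> x w", OF rl] by auto
  have rr': "\<rho> z (x - y) = \<rho> z x - \<rho> z y" "\<rho> z (- x) = - \<rho> z x" for x y z
    using addhom[of "\<rho> z", OF rr] by auto
  have A': "A (x - y) = A x - A y" "A (- x) = - A x" for x y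
    using addhom[of A, OF Aadd] by auto
  have sw: "br (A (\<rho> x w)) (A u) = - br (A u) (A (\<rho> x w))" for x w u by (rule anti)
  have s31: "br (A u3) (A u1) = - br (A u1) (A u3)" by (rule anti)
  have J: "br (A u3) (br (A u1) (A u2)) = - br (A u1) (br (A u2) (A u3)) - br (A u2) (br (A u3) (A u1))"
  proof -
    let ?a = "br (A u1) (br (A u2) (A u3))" and ?b = "br (A u2) (br (A u3) (A u1))"
      and ?c = "br (A u3) (br (A u1) (A u2))"
    have "?a + ?b + ?c = 0" by (rule jac)
    then have "?c = - ?a - ?b" by (metis add.commute add_diff_cancel_left' diff_0 diff_diff_eq)
    then show ?thesis .
  qed
  show ?thesis
    unfolding coboundary2_def T_bracket_def
    by (simp add: bl bl' brr br' rl rl' rr rr' Aadd A' rep sw J s31 algebra_simps)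
qed


definition cv :: "('a \<Rightarrow> 'b \<Rightarrow> 'c::comm_monoid_add) \<Rightarrow> (nat \<Rightarrow> 'a) \<Rightarrow> (nat \<Rightarrow> 'b) \<Rightarrow> nat \<Rightarrow> 'c" where
  "cv f X Y = (\<lambda>k. \<Sum>i\<le>k. f (X i) (Y (k - i)))"

definition S3 :: "nat \<Rightarrow> (nat \<Rightarrow> nat \<Rightarrow> nat \<Rightarrow> 'c::comm_monoid_add) \<Rightarrow> 'c" where
  "S3 k H = (\<Sum>(i,j)\<in>{(i,j). i + j \<le> k}. H i j (k - i - j))"

lemma Pfin: "finite {(i,j). i + j \<le> (k::nat)}"
  by (rule finite_subset[of _ "{..k} \<times> {..k}"]) auto

lemma tri1: "(\<Sum>i\<le>k. \<Sum>j\<le>k-i. H i j (k-i-j)) = S3 k H"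
proof -
  have e: "{(i,j). i + j \<le> k} = Sigma {..k} (\<lambda>i. {..k-i})" by auto
  show ?thesis unfolding S3_def e by (rule sum.Sigma) auto
qed

lemma tri2: "(\<Sum>m\<le>k. \<Sum>i\<le>m. H i (m-i) (k-m)) = S3 k H"
proof -
  have "S3 k H = (\<Sum>m\<le>k. \<Sum>i\<le>m. H i (m-i) (k - i - (m-i)))"
    unfolding S3_def by (rule sum.triangle_reindex_eq)
  also have "\<dots> = (\<Sum>m\<le>k. \<Sum>i\<le>m. H i (m-i) (k-m))"
    by (intro sum.cong refl) auto
  finally show ?thesis by simp
qed

lemma cyc: "S3 k H = S3 k (\<lambda>a b c. H c a b)"
  unfolding S3_def
  by (rule sum.reindex_bij_witness[where i="\<lambda>(c,d). (k-c-d, c)" and j="\<lambda>(a,b). (b, k-a-b)"]) auto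

lemma swp: "S3 k H = S3 k (\<lambda>a b c. H b a c)"
  unfolding S3_def
  by (rule sum.reindex_bij_witness[where i="\<lambda>(c,d). (d, c)" and j="\<lambda>(a,b). (b, a)"]) (auto simp: add.commute)

lemma S3_add: "S3 k H + S3 k G = S3 k (\<lambda>a b c. H a b c + G a b c)"
  unfolding S3_def by (simp add: sum.distrib[symmetric] case_prod_beta)

lemma S3_diff: "S3 k H - S3 k G = S3 k (\<lambda>a b c. H a b c - G a b c)"
  for H :: "nat \<Rightarrow> nat \<Rightarrow> nat \<Rightarrow> 'c::ab_group_add"
  unfolding S3_def by (simp add: sum_subtractf[symmetric] case_prod_beta)

lemma S3_cong: "(\<And>a b c. H a b c = G a b c) \<Longrightarrow> S3 k H = S3 k G"
  by (simp add: S3_def)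

lemma rev_sum: "(\<Sum>i\<le>k. g (k - i)) = (\<Sum>i\<le>(k::nat). g i)"
  by (rule sum.reindex_bij_witness[where i="\<lambda>i. k - i" and j="\<lambda>i. k - i"]) auto

lemma cvR:
  fixes f :: "'a \<Rightarrow> 'b::ab_group_add \<Rightarrow> 'c::ab_group_add"
  assumes "\<And>i y z. f (X i) (y + z) = f (X i) y + f (X i) z"
  shows "cv f X (cv g Y Z) k = S3 k (\<lambda>i j l. f (X i) (g (Y j) (Z l)))"
proof -
  have fs: "f (X i) (sum h A) = (\<Sum>a\<in>A. f (X i) (h a))" for i h A
    by (rule addhom_sum) (rule assms)
  show ?thesis
    using tri1[where k=k and H="\<lambda>i j l. f (X i) (g (Y j) (Z l))"] unfolding cv_def by (simp add: fs)
qed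

lemma cvL:
  fixes f :: "'a::ab_group_add \<Rightarrow> 'b \<Rightarrow> 'c::ab_group_add"
  assumes "\<And>x y z. f (x + y) z = f x z + f y z"
  shows "cv f (cv g X Y) Z k = S3 k (\<lambda>i j l. f (g (X i) (Y j)) (Z l))"
proof -
  have fs: "f (sum h A) z = (\<Sum>a\<in>A. f (h a) z)" for z h A
    using addhom_sum[of "\<lambda>x. f x z" h A] assms by simp
  show ?thesis
    using tri2[where k=k and H="\<lambda>i j l. f (g (X i) (Y j)) (Z l)"] unfolding cv_def by (simp add: fs)
qed

lemma cv_addR:
  assumes "\<And>i y z. f (X i) (y + z) = f (X i) y + f (X i) z"
  shows "cv f X (Y + Z) = cv f X Y + cv f X Z"
  unfolding cv_def by (rule ext) (simp add: assms sum.distrib)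

lemma cv_addL:
  assumes "\<And>x y z. f (x + y) z = f x z + f y z"
  shows "cv f (X + Y) Z = cv f X Z + cv f Y Z"
  unfolding cv_def by (rule ext) (simp add: assms sum.distrib)

lemma cv_anti:
  fixes br :: "'a::ab_group_add \<Rightarrow> 'a \<Rightarrow> 'a"
  assumes "\<And>x y. br x y = - br y x"
  shows "cv br X Y = - cv br Y X"
proof (rule ext)
  fix k
  have "cv br Y X k = (\<Sum>i\<le>k. br (Y (k - i)) (X (k - (k - i))))"
    unfolding cv_def by (rule rev_sum[symmetric])
  also have "\<dots> = (\<Sum>i\<le>k. - br (X i) (Y (k - i)))"
    by (intro sum.cong refl) (simp add: assms[of "Y _"])
  finally show "cv br X Y k = (- cv br Y X) k" unfolding cv_def by (simp add: sum_negf)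
qed

lemma cv_jac:
  fixes br :: "'a::ab_group_add \<Rightarrow> 'a \<Rightarrow> 'a"
  assumes bl: "\<And>x y z. br (x+y) z = br x z + br y z"
   and brr: "\<And>x y z. br x (y+z) = br x y + br x z"
   and jac: "\<And>x y z. br x (br y z) + br y (br z x) + br z (br x y) = 0"
  shows "cv br X (cv br Y Z) + cv br Y (cv br Z X) + cv br Z (cv br X Y) = 0"
proof (rule ext)
  fix k
  have e2: "S3 k (\<lambda>i j l. br (Y i) (br (Z j) (X l))) = S3 k (\<lambda>i j l. br (Y j) (br (Z l) (X i)))"
    using cyc[of k "\<lambda>i j l. br (Y i) (br (Z j) (X l))"] cyc[of k "\<lambda>i j l. br (Y l) (br (Z i) (X j))"]
    by simp
  have e3: "S3 k (\<lambda>i j l. br (Z i) (br (X j) (Y l))) = S3 k (\<lambda>i j l. br (Z l) (br (X i) (Y j)))"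
    using cyc[of k "\<lambda>i j l. br (Z i) (br (X j) (Y l))"] by simp
  show "(cv br X (cv br Y Z) + cv br Y (cv br Z X) + cv br Z (cv br X Y)) k = 0 k"
    by (simp add: cvR[where f=br, OF brr] e2 e3 S3_add jac, simp add: S3_def)
qed

lemma cv_rep:
  fixes br :: "'a::ab_group_add \<Rightarrow> 'a \<Rightarrow> 'a" and \<rho> :: "'a \<Rightarrow> 'b::ab_group_add \<Rightarrow> 'b"
  assumes rl: "\<And>x y w. \<rho> (x+y) w = \<rho> x w + \<rho> y w"
   and rr: "\<And>x w w'. \<rho> x (w+w') = \<rho> x w + \<rho> x w'"
   and rep: "\<And>x y w. \<rho> (br x y) w = \<rho> x (\<rho> y w) - \<rho> y (\<rho> x w)"
  shows "cv \<rho> (cv br X Y) W = cv \<rho> X (cv \<rho> Y W) - cv \<rho> Y (cv \<rho> X W)"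
proof (rule ext)
  fix k
  have e: "S3 k (\<lambda>i j l. \<rho> (Y i) (\<rho> (X j) (W l))) = S3 k (\<lambda>i j l. \<rho> (Y j) (\<rho> (X i) (W l)))"
    using swp[of k "\<lambda>i j l. \<rho> (Y i) (\<rho> (X j) (W l))"] by simp
  show "cv \<rho> (cv br X Y) W k = (cv \<rho> X (cv \<rho> Y W) - cv \<rho> Y (cv \<rho> X W)) k"
    by (simp add: cvL[where f=\<rho>, OF rl] cvR[where f=\<rho>, OF rr] e S3_diff rep)
qed


definition dl :: "'a::zero \<Rightarrow> nat \<Rightarrow> 'a" where "dl w = (\<lambda>k. if k = 0 then w else 0)"

lemma cvdR:
  assumes "\<And>x. f x 0 = 0"
  shows "cv f Z (dl w) = (\<lambda>q. f (Z q) w)"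
proof (rule ext)
  fix q
  have "cv f Z (dl w) q = (\<Sum>i\<le>q. if i = q then f (Z i) w else 0)"
    unfolding cv_def dl_def by (intro sum.cong refl) (auto simp: assms)
  then show "cv f Z (dl w) q = f (Z q) w" by simp
qed

lemma sum_first_only:
  assumes "\<And>i. 1 \<le> i \<Longrightarrow> i \<le> Suc n \<Longrightarrow> g i = 0"
  shows "(\<Sum>i\<le>Suc n. g i) = (g 0 :: 'a::comm_monoid_add)"
  unfolding sum.atMost_Suc_shift using assms by simp

theorem proposition5p13:
  fixes sg :: "'k::field \<Rightarrow> 'g::ab_group_add \<Rightarrow> 'g"
    and sv :: "'k \<Rightarrow> 'v::ab_group_add \<Rightarrow> 'v"
    and br :: "'g \<Rightarrow> 'g \<Rightarrow> 'g" and \<rho> :: "'g \<Rightarrow> 'v \<Rightarrow> 'v"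
    and T :: "'v \<Rightarrow> 'g" and n :: nat and \<tau> :: "nat \<Rightarrow> 'v \<Rightarrow> 'g"
  assumes "lie_representation sg sv br \<rho>"
    and "O_operator sg sv br \<rho> T"
    and "order_deformation sg sv br \<rho> T n \<tau>"
  shows "\<forall>u1 u2 u3. coboundary2 br \<rho> T (obstruction br \<rho> n \<tau>) u1 u2 u3 = 0"
proof (intro allI)
  fix u1 u2 u3
  from assms(1) have LA: "lie_algebra sg br" and RP: "lie_representation sg sv br \<rho>"
    unfolding lie_representation_def by auto
  have brr: "br x (y+z) = br x y + br x z" for x y z
    using LA unfolding lie_algebra_def Vector_Spaces.linear_iff by blast
  have bl: "br (x+y) z = br x z + br y z" for x y z
    using LA unfolding lie_algebra_def Vector_Spaces.linear_iff by blast
  have alt: "br x x = 0" for x using LA unfolding lie_algebra_def by blast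
  have jac: "br x (br y z) + br y (br z x) + br z (br x y) = 0" for x y z
    using LA unfolding lie_algebra_def by blast
  have anti: "br x y = - br y x" for x y
  proof -
    have "0 = br (x+y) (x+y)" by (simp add: alt)
    also have "\<dots> = br x y + br y x" by (simp only: bl brr alt[of x] alt[of y]) simp
    finally have "br x y + br y x = 0" by simp
    then show ?thesis by (simp add: eq_neg_iff_add_eq_0)
  qed
  have rr: "\<rho> x (w+w') = \<rho> x w + \<rho> x w'" for x w w'
    using RP unfolding lie_representation_def Vector_Spaces.linear_iff by blast
  have rl: "\<rho> (x+y) w = \<rho> x w + \<rho> y w" for x y w
    using RP unfolding lie_representation_def Vector_Spaces.linear_iff by blast
  have rep: "\<rho> (br x y) w = \<rho> x (\<rho> y w) - \<rho> y (\<rho> x w)" for x y w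
    using RP unfolding lie_representation_def by blast
  from assms(3) have t0: "\<tau> 0 = T"
    and tlin: "\<And>i. i \<le> n \<Longrightarrow> Vector_Spaces.linear sv sg (\<tau> i)"
    and teq: "\<And>i u v. i \<le> n \<Longrightarrow> (\<Sum>k\<in>{0..i}. br (\<tau> k u) (\<tau> (i - k) v)
                    - \<tau> k (\<rho> (\<tau> (i - k) u) v - \<rho> (\<tau> (i - k) v) u)) = 0"
    unfolding order_deformation_def by auto
  define tau' where "tau' i = (if i \<le> n then \<tau> i else (\<lambda>_. 0))" for i
  have tadd: "tau' i (x + y) = tau' i x + tau' i y" for i x y
    using tlin[of i] unfolding tau'_def Vector_Spaces.linear_iff by auto
  have tau0: "tau' 0 = T" by (simp add: tau'_def t0)
  have bl': "br (x - y) z = br x z - br y z" "br (- x) z = - br x z" "br 0 z = 0" for x y z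
    using addhom[of "\<lambda>x. br x z", OF bl] by auto
  have br': "br z (x - y) = br z x - br z y" "br z (- x) = - br z x" "br z 0 = 0" for x y z
    using addhom[of "br z", OF brr] by auto
  have rl': "\<rho> (x - y) w = \<rho> x w - \<rho> y w" "\<rho> (- x) w = - \<rho> x w" "\<rho> 0 w = 0" for x y w
    using addhom[of "\<lambda>x. \<rho> x w", OF rl] by auto
  have rr': "\<rho> z (x - y) = \<rho> z x - \<rho> z y" "\<rho> z (- x) = - \<rho> z x" "\<rho> z 0 = 0" for x y z
    using addhom[of "\<rho> z", OF rr] by auto
  have t': "tau' i (x - y) = tau' i x - tau' i y" "tau' i (- x) = - tau' i x" "tau' i 0 = 0" for i x y
    using addhom[of "tau' i", OF tadd] by auto
  define AA where "AA = cv (\<lambda>f x. f x) tau'"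
  define GG where "GG = (\<lambda>U V. cv br (AA U) (AA V) - AA (T_bracket (cv \<rho>) AA U V))"
  define F where "F k x y = (\<Sum>i\<le>k. br (tau' i x) (tau' (k-i) y)
        - tau' i (\<rho> (tau' (k-i) x) y - \<rho> (tau' (k-i) y) x))" for k x y
  have Aadd: "AA (U + V) = AA U + AA V" for U V
    unfolding AA_def by (rule cv_addR) (simp add: tadd)
  have Adiff: "AA (U - V) = AA U - AA V" for U V
    using addhom[of AA, OF Aadd] by simp
  have L0: "coboundary2 (cv br) (cv \<rho>) AA GG (dl u1) (dl u2) (dl u3) = 0"
    unfolding GG_def
    by (rule Lgen[where br="cv br" and \<rho>="cv \<rho>" and A=AA, OF cv_addL[OF bl] cv_addR[OF brr]
         cv_anti[OF anti] cv_jac[OF bl brr jac] cv_addL[OF rl] cv_addR[OF rr] cv_rep[OF rl rr rep] Aadd])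
  have Adl: "AA (dl w) = (\<lambda>m. tau' m w)" for w
  proof (rule ext)
    fix m
    have "AA (dl w) m = (\<Sum>i\<le>m. if i = m then tau' i w else 0)"
      unfolding AA_def cv_def dl_def by (intro sum.cong refl) (auto simp: t')
    then show "AA (dl w) m = tau' m w" by simp
  qed
  have Gd: "GG X (dl w) k = (\<Sum>p\<le>k. F (k-p) (X p) w)" for X w k
  proof -
    have P1: "cv br (AA X) (AA (dl w)) k = S3 k (\<lambda>i j l. br (tau' i (X j)) (tau' l w))"
      unfolding Adl unfolding AA_def by (rule cvL) (rule bl)
    have e2: "cv \<rho> (AA X) (dl w) = cv (\<lambda>f x. \<rho> (f x) w) tau' X"
      unfolding cvdR[where f=\<rho>, OF rr'(3)] unfolding AA_def cv_def
      by (rule ext) (rule addhom_sum, rule rl)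
    have P2: "AA (cv \<rho> (AA X) (dl w)) k = S3 k (\<lambda>i j l. tau' i (\<rho> (tau' j (X l)) w))"
      unfolding e2 unfolding AA_def by (rule cvR) (rule tadd)
    have P3: "AA (cv \<rho> (AA (dl w)) X) k = S3 k (\<lambda>i j l. tau' i (\<rho> (tau' j w) (X l)))"
      unfolding Adl unfolding AA_def by (rule cvR) (rule tadd)
    have "GG X (dl w) k = S3 k (\<lambda>i j l. br (tau' i (X j)) (tau' l w))
        - (S3 k (\<lambda>i j l. tau' i (\<rho> (tau' j (X l)) w)) - S3 k (\<lambda>i j l. tau' i (\<rho> (tau' j w) (X l))))"
      unfolding GG_def T_bracket_def Adiff using P1 P2 P3 by simp
    also have "\<dots> = S3 k (\<lambda>p i j. br (tau' i (X p)) (tau' j w))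
        - (S3 k (\<lambda>p i j. tau' i (\<rho> (tau' j (X p)) w)) - S3 k (\<lambda>p i j. tau' i (\<rho> (tau' j w) (X p))))"
      using swp[where k=k and H="\<lambda>p i j. br (tau' i (X p)) (tau' j w)"]
        cyc[where k=k and H="\<lambda>p i j. tau' i (\<rho> (tau' j (X p)) w)"]
        cyc[where k=k and H="\<lambda>p i j. tau' i (\<rho> (tau' j w) (X p))"] by simp
    also have "\<dots> = S3 k (\<lambda>p i j. br (tau' i (X p)) (tau' j w)
        - (tau' i (\<rho> (tau' j (X p)) w) - tau' i (\<rho> (tau' j w) (X p))))"
      by (simp add: S3_diff)
    also have "\<dots> = (\<Sum>p\<le>k. F (k-p) (X p) w)"
      unfolding F_def tri1[symmetric] by (simp add: t')
    finally show ?thesis .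
  qed
  have F0: "F j 0 w = 0" for j w by (simp add: F_def t' br' bl' rl' rr')
  have Gdd: "GG (dl v) (dl w) k = F k v w" for v w k
  proof -
    have "GG (dl v) (dl w) k = (\<Sum>p\<le>k. if p = 0 then F k v w else 0)"
      unfolding Gd unfolding dl_def by (intro sum.cong refl) (auto simp: F0)
    then show ?thesis by simp
  qed
  have Fz: "F j x y = 0" if "j \<le> n" for j x y
  proof -
    have "F j x y = (\<Sum>k\<in>{0..j}. br (\<tau> k x) (\<tau> (j - k) y)
                    - \<tau> k (\<rho> (\<tau> (j - k) x) y - \<rho> (\<tau> (j - k) y) x))"
      unfolding F_def atMost_atLeast0 using that by (intro sum.cong refl) (auto simp: tau'_def)
    then show ?thesis using teq[OF that] by simp
  qed
  define Ob where "Ob = obstruction br \<rho> n \<tau>"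
  have FN: "F (Suc n) x y = Ob x y" for x y
  proof -
    have "F (Suc n) x y = (\<Sum>i\<le>n. br (tau' i x) (tau' (Suc n - i) y)
        - tau' i (\<rho> (tau' (Suc n - i) x) y - \<rho> (tau' (Suc n - i) y) x))"
      unfolding F_def by (simp add: tau'_def bl' rl')
    also have "\<dots> = (\<Sum>i\<in>insert 0 {1..n}. br (tau' i x) (tau' (Suc n - i) y)
        - tau' i (\<rho> (tau' (Suc n - i) x) y - \<rho> (tau' (Suc n - i) y) x))"
      by (intro sum.cong refl) auto
    also have "\<dots> = Ob x y"
    proof -
      have tSn: "tau' (Suc n) = (\<lambda>_. 0)" by (simp add: tau'_def)
      have z: "br (tau' 0 x) (tau' (Suc n - 0) y) - tau' 0 (\<rho> (tau' (Suc n - 0) x) y - \<rho> (tau' (Suc n - 0) y) x) = 0"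
        by (simp only: diff_zero tSn br' rl') (simp add: t')
      have s: "(\<Sum>i\<in>{1..n}. br (tau' i x) (tau' (Suc n - i) y)
        - tau' i (\<rho> (tau' (Suc n - i) x) y - \<rho> (tau' (Suc n - i) y) x)) = Ob x y"
        unfolding Ob_def obstruction_def by (intro sum.cong refl) (auto simp: tau'_def)
      show ?thesis by (subst sum.insert) (use z s in auto)
    qed
    finally show ?thesis .
  qed
  have T1: "cv br (AA (dl a)) (GG (dl b) (dl c)) (Suc n) = br (T a) (Ob b c)" for a b c
    unfolding Adl cv_def Gdd by (subst sum_first_only) (auto simp: Fz br' tau0 FN)
  have T2: "AA (cv \<rho> (GG (dl b) (dl c)) (dl a)) (Suc n) = T (\<rho> (Ob b c) a)" for a b c
    unfolding cvdR[where f=\<rho>, OF rr'(3)] unfolding AA_def cv_def Gdd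
    by (subst sum_first_only) (auto simp: Fz rl' t' tau0 FN)
  have T3: "GG (T_bracket (cv \<rho>) AA (dl a) (dl b)) (dl c) (Suc n) = Ob (T_bracket \<rho> T a b) c" for a b c
  proof -
    have "GG (T_bracket (cv \<rho>) AA (dl a) (dl b)) (dl c) (Suc n)
       = F (Suc n) (T_bracket (cv \<rho>) AA (dl a) (dl b) 0) c"
      unfolding Gd by (subst sum_first_only) (auto simp: Fz)
    also have "T_bracket (cv \<rho>) AA (dl a) (dl b) 0 = T_bracket \<rho> T a b"
      unfolding T_bracket_def cvdR[where f=\<rho>, OF rr'(3)] Adl by (simp add: tau0)
    finally show ?thesis by (simp add: FN)
  qed
  have "coboundary2 (cv br) (cv \<rho>) AA GG (dl u1) (dl u2) (dl u3) (Suc n) = 0"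
    using L0 by simp
  then show "coboundary2 br \<rho> T (obstruction br \<rho> n \<tau>) u1 u2 u3 = 0"
    unfolding coboundary2_def Ob_def[symmetric] by (simp only: minus_apply plus_fun_apply T1 T2 T3)
qed

end
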